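(* Let $f_1,\dots,f_n:\mathbb{R}^d\to\mathbb{R}$ satisfy Assumptions A1 and A2. Then the map $x^*:\Delta^{n-1}\to\mathbb{R}^d$, $x^*(\beta)=\operatorname{argmin}_x f_\beta(x)$, is $M_0$-Lipschitz continuous and has $M_1$-Lipschitz continuous gradients, where \[M_0:=\kappa R\qquad\text{and}\qquad M_1:=2\kappa^2R\left(1+\frac{L_HR}{\mu}\right).\]
   Context: Assumption A1: each $f_i$ is twice differentiable with $\mu\mathbf{I}\preceq\nabla^2 f_i(x)\preceq L\mathbf{I}$ for all $x$, $0<\mu\le L$; $\kappa:=L/\mu$. Assumption A2: $\|\nabla^2 f_i(x)-\nabla^2 f_i(y)\|_2\le L_H\|x-y\|_2$ for all $x,y$ and all $i$. $f_\beta:=\sum_i\beta_if_i$ for $\beta$ in the simplex $\Delta^{n-1}$. $\mathrm{Pareto}(F)$ is the set of Pareto optimal points of $F=(f_1,\dots,f_n)$ (equivalently, under A1, points $x$ with $\nabla f_\beta(x)=0$ for some $\beta\in\Delta^{n-1}$), and $R$ is its diameter in $\ell_2$. The simplex $\Delta^{n-1}$ carries the $\ell_1$ metric and $\mathbb{R}^d$ the $\ell_2$ metric; Lipschitz continuity of $\nabla x^*$ is measured in the operator norm $\|A\|_{1,2}:=\sup_{\|z\|_1=1}\|Az\|_2$. *)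

theory Defs
  imports "HOL-Analysis.Analysis"
begin

text \<open>Objectives are indexed by a finite type 'n (so n = CARD('n)), points live in real^'d.\<close>

definition l1norm :: "real^'n \<Rightarrow> real" where
  "l1norm z = (\<Sum>i\<in>UNIV. \<bar>z $ i\<bar>)"

definition std_simplex :: "(real^'n) set" where
  "std_simplex = {\<beta>. (\<forall>i. 0 \<le> \<beta> $ i) \<and> (\<Sum>i\<in>UNIV. \<beta> $ i) = 1}"

text \<open>Nonnegative orthant without the origin: the natural open-cone domain of x* containing the std_simplex,
 used to speak of the (unique) derivative of x* at points of the std_simplex.\<close>
definition posorth :: "(real^'n) set" where
  "posorth = {\<beta>. (\<forall>i. 0 \<le> \<beta> $ i)} - {0}"

definition fbeta :: "('n \<Rightarrow> real^'d \<Rightarrow> real) \<Rightarrow> real^'n \<Rightarrow> real^'d \<Rightarrow> real" where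
  "fbeta f \<beta> x = (\<Sum>i\<in>UNIV. \<beta> $ i * f i x)"

definition xstar :: "('n \<Rightarrow> real^'d \<Rightarrow> real) \<Rightarrow> real^'n \<Rightarrow> real^'d" where
  "xstar f \<beta> = (THE x. \<forall>y. fbeta f \<beta> x \<le> fbeta f \<beta> y)"

definition pareto_optimal :: "('n \<Rightarrow> real^'d \<Rightarrow> real) \<Rightarrow> real^'d \<Rightarrow> bool" where
  "pareto_optimal f x \<longleftrightarrow> \<not> (\<exists>y. (\<forall>i. f i y \<le> f i x) \<and> (\<exists>i. f i y < f i x))"

definition pareto_set :: "('n \<Rightarrow> real^'d \<Rightarrow> real) \<Rightarrow> (real^'d) set" where
  "pareto_set f = {x. pareto_optimal f x}"

definition op_norm_12 :: "real^'n^'d \<Rightarrow> real" where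
  "op_norm_12 A = Sup {norm (A *v z) | z. l1norm z = 1}"

end

theory Submission
  imports Defs
begin


lemma strong_mono:
  fixes g :: "'a::euclidean_space \<Rightarrow> 'a"
  assumes gd: "\<And>x. (g has_derivative H x) (at x)"
    and hb: "\<And>x v. m * (norm v)\<^sup>2 \<le> v \<bullet> H x v"
  shows "m * (norm (x - y))\<^sup>2 \<le> (g x - g y) \<bullet> (x - y)"
proof -
  define p where "p t = y + t *\<^sub>R (x - y)" for t :: real
  have d: "((\<lambda>t. g (p t) \<bullet> (x - y)) has_derivative (\<lambda>s. H (p t) (s *\<^sub>R (x - y)) \<bullet> (x - y))) (at t within {0..1})" for t
  proof -
    have d1: "(p has_derivative (\<lambda>s. s *\<^sub>R (x - y))) (at t within {0..1})"
      unfolding p_def by (auto intro!: derivative_eq_intros)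
    have "((\<lambda>t. g (p t)) has_derivative (\<lambda>s. H (p t) (s *\<^sub>R (x - y)))) (at t within {0..1})"
      using has_derivative_compose[OF d1 gd] by simp
    then show ?thesis by (auto intro!: derivative_eq_intros)
  qed
  obtain t where "t \<in> {0..1}" and eq: "g (p 1) \<bullet> (x - y) - g (p 0) \<bullet> (x - y) = H (p t) ((1 - 0) *\<^sub>R (x - y)) \<bullet> (x - y)"
    using mvt_very_simple[of 0 1 "\<lambda>t. g (p t) \<bullet> (x - y)", OF _ d] by auto
  have "H (p t) ((1 - 0) *\<^sub>R (x - y)) \<bullet> (x - y) = (x - y) \<bullet> H (p t) (x - y)"
    by (simp add: inner_commute)
  also have "\<dots> \<ge> m * (norm (x - y))\<^sup>2" using hb by simp
  finally show ?thesis using eq by (simp add: p_def inner_diff_left)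
qed

lemma quad_lower:
  fixes F :: "'a::euclidean_space \<Rightarrow> real"
  assumes Fd: "\<And>x. (F has_derivative (\<lambda>h. g x \<bullet> h)) (at x)"
    and gd: "\<And>x. (g has_derivative H x) (at x)"
    and hb: "\<And>x v. m * (norm v)\<^sup>2 \<le> v \<bullet> H x v"
  shows "F 0 + g 0 \<bullet> x + m / 2 * (norm x)\<^sup>2 \<le> F x"
proof -
  define \<psi> where "\<psi> t = F (t *\<^sub>R x) - t * (g 0 \<bullet> x) - m / 2 * t\<^sup>2 * (norm x)\<^sup>2" for t :: real
  have d: "(\<psi> has_derivative (\<lambda>s. g (t *\<^sub>R x) \<bullet> (s *\<^sub>R x) - s * (g 0 \<bullet> x) - m / 2 * (2 * t * s) * (norm x)\<^sup>2)) (at t within {0..1})" for t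
  proof -
    have d1: "((\<lambda>t. t *\<^sub>R x) has_derivative (\<lambda>s. s *\<^sub>R x)) (at t within {0..1})"
      by (auto intro!: derivative_eq_intros)
    have "((\<lambda>t. F (t *\<^sub>R x)) has_derivative (\<lambda>s. g (t *\<^sub>R x) \<bullet> (s *\<^sub>R x))) (at t within {0..1})"
      using has_derivative_compose[OF d1 Fd] by simp
    then show ?thesis unfolding \<psi>_def
      by (auto intro!: derivative_eq_intros simp: power2_eq_square algebra_simps)
  qed
  obtain t where t: "t \<in> {0..1}" and eq: "\<psi> 1 - \<psi> 0 = g (t *\<^sub>R x) \<bullet> ((1 - 0) *\<^sub>R x) - (1 - 0) * (g 0 \<bullet> x) - m / 2 * (2 * t * (1 - 0)) * (norm x)\<^sup>2"
    using mvt_very_simple[of 0 1 \<psi>, OF _ d] by auto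
  have "0 \<le> g (t *\<^sub>R x) \<bullet> x - g 0 \<bullet> x - m * t * (norm x)\<^sup>2"
  proof (cases "t = 0")
    case True then show ?thesis by simp
  next
    case False
    then have tp: "t > 0" using t by auto
    have "m * (norm (t *\<^sub>R x - 0))\<^sup>2 \<le> (g (t *\<^sub>R x) - g 0) \<bullet> (t *\<^sub>R x - 0)"
      by (rule strong_mono[OF gd hb])
    then have "t * (m * t * (norm x)\<^sup>2) \<le> t * ((g (t *\<^sub>R x) - g 0) \<bullet> x)"
      by (simp add: power2_eq_square algebra_simps)
    then have "m * t * (norm x)\<^sup>2 \<le> (g (t *\<^sub>R x) - g 0) \<bullet> x"
      using tp by (simp add: mult_le_cancel_left)
    then show ?thesis by (simp add: inner_diff_left)
  qed
  then have "\<psi> 0 \<le> \<psi> 1" using eq by simp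
  then show ?thesis unfolding \<psi>_def by simp
qed

lemma taylor1:
  fixes g :: "'a::real_normed_vector \<Rightarrow> 'b::real_normed_vector"
  assumes gd: "\<And>x. (g has_derivative H x) (at x)"
    and lip: "\<And>z. onorm (\<lambda>v. H z v - H x v) \<le> B * norm (z - x)"
    and B: "0 \<le> B"
  shows "norm (g y - g x - H x (y - x)) \<le> B * (norm (y - x))\<^sup>2"
proof -
  have "norm (g y - g x - H x (y - x)) \<le> norm (y - x) * (B * norm (y - x))"
  proof (rule differentiable_bound_linearization[where S = "closed_segment x y"])
    show "x + t *\<^sub>R (y - x) \<in> closed_segment x y" if "t \<in> {0..1}" for t
      using that by (auto simp: closed_segment_def algebra_simps intro!: exI[of _ t])
    show "(g has_derivative H z) (at z within closed_segment x y)" for z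
      using gd has_derivative_at_withinI by blast
    show "onorm (H z - H x) \<le> B * norm (y - x)" if "z \<in> closed_segment x y" for z
    proof -
      have "onorm (H z - H x) \<le> B * norm (z - x)" using lip[of z] by (simp add: fun_diff_def)
      also have "\<dots> \<le> B * norm (y - x)" using segment_bound1[OF that] B by (simp add: mult_left_mono)
      finally show ?thesis .
    qed
    show "x \<in> closed_segment x y" by simp
  qed
  then show ?thesis by (simp add: power2_eq_square algebra_simps)
qed



lemma LH_nonneg:
  fixes Hm :: "real^'d \<Rightarrow> real^'d^'d"
  assumes lip: "\<And>x y. onorm (\<lambda>v. (Hm x - Hm y) *v v) \<le> LH * dist x y"
  shows "0 \<le> LH"
proof -
  have "0 \<le> onorm (\<lambda>v. (Hm 0 - Hm (axis undefined 1)) *v v)"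
    by (rule onorm_pos_le[OF matrix_vector_mul_bounded_linear])
  also have "\<dots> \<le> LH * dist 0 (axis (undefined::'d) (1::real))" by (rule lip)
  finally show ?thesis by (simp add: dist_norm)
qed

lemma matnorm_lip:
  fixes Hm :: "real^'d \<Rightarrow> real^'d^'d"
  assumes lip: "\<And>x y. onorm (\<lambda>v. (Hm x - Hm y) *v v) \<le> LH * dist x y"
  shows "norm ((Hm x - Hm y) *v v) \<le> LH * norm (x - y) * norm v"
proof -
  have "norm ((Hm x - Hm y) *v v) \<le> onorm (\<lambda>v. (Hm x - Hm y) *v v) * norm v"
    by (rule onorm[OF matrix_vector_mul_bounded_linear])
  also have "\<dots> \<le> LH * norm (x - y) * norm v"
    using lip[of x y] by (simp add: dist_norm mult_right_mono)
  finally show ?thesis .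
qed

lemma taylor_grad:
  fixes g :: "real^'d \<Rightarrow> real^'d" and Hm :: "real^'d \<Rightarrow> real^'d^'d"
  assumes gd: "\<And>x. (g has_derivative (\<lambda>h. Hm x *v h)) (at x)"
    and lip: "\<And>x y. onorm (\<lambda>v. (Hm x - Hm y) *v v) \<le> LH * dist x y"
  shows "norm (g y - g x - Hm x *v (y - x)) \<le> LH * (norm (y - x))\<^sup>2"
proof (rule taylor1[where H = "\<lambda>x h. Hm x *v h", OF gd])
  show "onorm (\<lambda>v. Hm z *v v - Hm x *v v) \<le> LH * norm (z - x)" for z
    using lip[of z x] by (simp add: matrix_vector_mult_diff_rdistrib dist_norm)
  show "0 \<le> LH" by (rule LH_nonneg[OF lip])
qed

lemma onorm_inner_le: "onorm (\<lambda>h. (w::'a::real_inner) \<bullet> h) \<le> norm w"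
  by (rule onorm_bound) (simp_all add: Cauchy_Schwarz_ineq2)

lemma delta_est:
  fixes F :: "real^'d \<Rightarrow> real" and g :: "real^'d \<Rightarrow> real^'d" and Hm :: "real^'d \<Rightarrow> real^'d^'d"
  assumes Fd: "\<And>x. (F has_derivative (\<lambda>h. g x \<bullet> h)) (at x)"
    and gd: "\<And>x. (g has_derivative (\<lambda>h. Hm x *v h)) (at x)"
    and lip: "\<And>x y. onorm (\<lambda>v. (Hm x - Hm y) *v v) \<le> LH * dist x y"
  shows "\<bar>F (x + a + b) - F (x + a) - F (x + b) + F x - a \<bullet> (Hm x *v b)\<bar>
     \<le> LH * norm a * (3 * (norm b)\<^sup>2 + norm a * norm b)"
proof -
  have LH: "0 \<le> LH" by (rule LH_nonneg[OF lip])
  define \<psi> where "\<psi> y = F (y + b) - F y" for y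
  have \<psi>d: "(\<psi> has_derivative (\<lambda>h. (g (y + b) - g y) \<bullet> h)) (at y within S)" for y S
  proof -
    have d1: "((\<lambda>y. y + b) has_derivative (\<lambda>h. h)) (at y within S)"
      by (auto intro!: derivative_eq_intros)
    have "((\<lambda>y. F (y + b)) has_derivative (\<lambda>h. g (y + b) \<bullet> h)) (at y within S)"
      using has_derivative_compose[OF d1 Fd] by simp
    moreover have "(F has_derivative (\<lambda>h. g y \<bullet> h)) (at y within S)"
      using Fd has_derivative_at_withinI by blast
    ultimately show ?thesis unfolding \<psi>_def
      by (auto dest: has_derivative_diff simp: inner_diff_left)
  qed
  have T: "norm (g y - g z - Hm z *v (y - z)) \<le> LH * (norm (y - z))\<^sup>2" for y z
    by (rule taylor_grad[OF gd lip])
  have step1: "norm (\<psi> (x + a) - \<psi> x - (g (x + b) - g x) \<bullet> ((x + a) - x))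
      \<le> norm ((x + a) - x) * (LH * (2 * (norm b)\<^sup>2 + norm a * norm b))"
  proof (rule differentiable_bound_linearization[where S = "closed_segment x (x + a)" and f' = "\<lambda>y h. (g (y + b) - g y) \<bullet> h"])
    show "x + t *\<^sub>R (x + a - x) \<in> closed_segment x (x + a)" if "t \<in> {0..1}" for t
      using that by (auto simp: closed_segment_def algebra_simps intro!: exI[of _ t])
    show "(\<psi> has_derivative (\<lambda>h. (g (z + b) - g z) \<bullet> h)) (at z within closed_segment x (x + a))" for z
      by (rule \<psi>d)
    show "x \<in> closed_segment x (x + a)" by simp
    show "onorm ((\<lambda>h. (g (z + b) - g z) \<bullet> h) - (\<lambda>h. (g (x + b) - g x) \<bullet> h))
        \<le> LH * (2 * (norm b)\<^sup>2 + norm a * norm b)" if z: "z \<in> closed_segment x (x + a)" for z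
    proof -
      define w where "w = (g (z + b) - g z) - (g (x + b) - g x)"
      have "((\<lambda>h. (g (z + b) - g z) \<bullet> h) - (\<lambda>h. (g (x + b) - g x) \<bullet> h)) = (\<lambda>h. w \<bullet> h)"
        by (auto simp: fun_diff_def w_def inner_diff_left)
      then have "onorm ((\<lambda>h. (g (z + b) - g z) \<bullet> h) - (\<lambda>h. (g (x + b) - g x) \<bullet> h)) \<le> norm w"
        using onorm_inner_le by metis
      also have "norm w \<le> LH * (2 * (norm b)\<^sup>2 + norm a * norm b)"
      proof -
        have "w = (g (z + b) - g z - Hm z *v ((z + b) - z)) - (g (x + b) - g x - Hm x *v ((x + b) - x)) + (Hm z - Hm x) *v b"
          by (simp add: w_def matrix_vector_mult_diff_rdistrib)
        then have nw: "norm w = norm (g (z + b) - g z - Hm z *v ((z + b) - z) - (g (x + b) - g x - Hm x *v ((x + b) - x)) + (Hm z - Hm x) *v b)" by simp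
        have "norm w \<le> norm (g (z + b) - g z - Hm z *v ((z + b) - z)) + norm (g (x + b) - g x - Hm x *v ((x + b) - x)) + norm ((Hm z - Hm x) *v b)"
          using norm_triangle_ineq[of "g (z + b) - g z - Hm z *v ((z + b) - z) - (g (x + b) - g x - Hm x *v ((x + b) - x))" "(Hm z - Hm x) *v b"]
            norm_triangle_ineq4[of "g (z + b) - g z - Hm z *v ((z + b) - z)" "g (x + b) - g x - Hm x *v ((x + b) - x)"]
          unfolding nw by linarith
        also have "\<dots> \<le> LH * (norm b)\<^sup>2 + LH * (norm b)\<^sup>2 + LH * norm (z - x) * norm b"
          using T[of "z + b" z] T[of "x + b" x] matnorm_lip[OF lip, of z x b] by (intro add_mono) auto
        also have "\<dots> \<le> LH * (norm b)\<^sup>2 + LH * (norm b)\<^sup>2 + LH * norm a * norm b"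
          using segment_bound1[OF z] LH by (simp add: mult_left_mono mult_right_mono)
        finally show ?thesis by (simp add: algebra_simps)
      qed
      finally show ?thesis .
    qed
  qed
  have step2: "\<bar>a \<bullet> (g (x + b) - g x) - a \<bullet> (Hm x *v b)\<bar> \<le> norm a * (LH * (norm b)\<^sup>2)"
  proof -
    have "\<bar>a \<bullet> (g (x + b) - g x) - a \<bullet> (Hm x *v b)\<bar> = \<bar>a \<bullet> (g (x + b) - g x - Hm x *v ((x + b) - x))\<bar>"
      by (simp add: inner_diff_right)
    also have "\<dots> \<le> norm a * norm (g (x + b) - g x - Hm x *v ((x + b) - x))"
      by (rule Cauchy_Schwarz_ineq2)
    also have "\<dots> \<le> norm a * (LH * (norm b)\<^sup>2)"
      using T[of "x + b" x] by (simp add: mult_left_mono)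
    finally show ?thesis .
  qed
  have e: "F (x + a + b) - F (x + a) - F (x + b) + F x = \<psi> (x + a) - \<psi> x"
    by (simp add: \<psi>_def)
  have "\<bar>\<psi> (x + a) - \<psi> x - a \<bullet> (g (x + b) - g x)\<bar> \<le> norm a * (LH * (2 * (norm b)\<^sup>2 + norm a * norm b))"
    using step1 by (simp add: inner_commute)
  with step2 have "\<bar>\<psi> (x + a) - \<psi> x - a \<bullet> (Hm x *v b)\<bar> \<le> norm a * (LH * (2 * (norm b)\<^sup>2 + norm a * norm b)) + norm a * (LH * (norm b)\<^sup>2)"
    by linarith
  then show ?thesis using e by (simp add: algebra_simps power2_eq_square)
qed



lemma hess_sym_gen:
  fixes F :: "real^'d \<Rightarrow> real" and g :: "real^'d \<Rightarrow> real^'d" and Hm :: "real^'d \<Rightarrow> real^'d^'d"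
  assumes Fd: "\<And>x. (F has_derivative (\<lambda>h. g x \<bullet> h)) (at x)"
    and gd: "\<And>x. (g has_derivative (\<lambda>h. Hm x *v h)) (at x)"
    and lip: "\<And>x y. onorm (\<lambda>v. (Hm x - Hm y) *v v) \<le> LH * dist x y"
  shows "u \<bullet> (Hm x *v v) = v \<bullet> (Hm x *v u)"
proof -
  have LH: "0 \<le> LH" by (rule LH_nonneg[OF lip])
  define C where "C = LH * (norm u * (3 * (norm v)\<^sup>2 + norm u * norm v) + norm v * (3 * (norm u)\<^sup>2 + norm v * norm u))"
  have C0: "0 \<le> C" unfolding C_def using LH by simp
  have key: "\<bar>u \<bullet> (Hm x *v v) - v \<bullet> (Hm x *v u)\<bar> \<le> h * C" if h: "h > 0" for h
  proof -
    define a where "a = h *\<^sub>R u"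
    define b where "b = h *\<^sub>R v"
    have e1: "\<bar>F (x + a + b) - F (x + a) - F (x + b) + F x - a \<bullet> (Hm x *v b)\<bar>
     \<le> LH * norm a * (3 * (norm b)\<^sup>2 + norm a * norm b)" by (rule delta_est[OF Fd gd lip])
    have e2: "\<bar>F (x + b + a) - F (x + b) - F (x + a) + F x - b \<bullet> (Hm x *v a)\<bar>
     \<le> LH * norm b * (3 * (norm a)\<^sup>2 + norm b * norm a)" by (rule delta_est[OF Fd gd lip])
    have eq: "x + b + a = x + a + b" by (simp add: ac_simps)
    have e2': "\<bar>F (x + a + b) - F (x + b) - F (x + a) + F x - b \<bullet> (Hm x *v a)\<bar>
     \<le> LH * norm b * (3 * (norm a)\<^sup>2 + norm b * norm a)" using e2 unfolding eq .
    have "\<bar>a \<bullet> (Hm x *v b) - b \<bullet> (Hm x *v a)\<bar> \<le> LH * norm a * (3 * (norm b)\<^sup>2 + norm a * norm b) + LH * norm b * (3 * (norm a)\<^sup>2 + norm b * norm a)"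
      using e1 e2' unfolding abs_le_iff by linarith
    moreover have "a \<bullet> (Hm x *v b) - b \<bullet> (Hm x *v a) = h\<^sup>2 * (u \<bullet> (Hm x *v v) - v \<bullet> (Hm x *v u))"
      by (simp add: a_def b_def matrix_vector_mult_scaleR power2_eq_square algebra_simps)
    moreover have "LH * norm a * (3 * (norm b)\<^sup>2 + norm a * norm b) + LH * norm b * (3 * (norm a)\<^sup>2 + norm b * norm a) = h\<^sup>2 * (h * C)"
      using h by (simp add: a_def b_def C_def power2_eq_square algebra_simps)
    ultimately have "h\<^sup>2 * \<bar>u \<bullet> (Hm x *v v) - v \<bullet> (Hm x *v u)\<bar> \<le> h\<^sup>2 * (h * C)"
      by (simp add: abs_mult)
    then show ?thesis using h by (simp add: mult_le_cancel_left)
  qed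
  show ?thesis
  proof (rule ccontr)
    assume ne: "u \<bullet> (Hm x *v v) \<noteq> v \<bullet> (Hm x *v u)"
    define D where "D = \<bar>u \<bullet> (Hm x *v v) - v \<bullet> (Hm x *v u)\<bar>"
    have D: "D > 0" using ne by (simp add: D_def)
    have "D \<le> (D / (C + 1)) * C" using key[of "D / (C + 1)"] D C0 by (simp add: D_def)
    also have "\<dots> < D" using D C0 by (simp add: field_simps)
    finally show False by simp
  qed
qed

lemma psd_cs:
  fixes A :: "real^'d^'d"
  assumes sym: "\<And>u v. u \<bullet> (A *v v) = v \<bullet> (A *v u)"
    and pos: "\<And>v. 0 \<le> v \<bullet> (A *v v)"
  shows "(u \<bullet> (A *v v))\<^sup>2 \<le> (u \<bullet> (A *v u)) * (v \<bullet> (A *v v))"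
proof -
  have q: "0 \<le> u \<bullet> (A *v u) + 2 * t * (u \<bullet> (A *v v)) + t\<^sup>2 * (v \<bullet> (A *v v))" for t
  proof -
    have "0 \<le> (u + t *\<^sub>R v) \<bullet> (A *v (u + t *\<^sub>R v))" by (rule pos)
    also have "\<dots> = u \<bullet> (A *v u) + t * (u \<bullet> (A *v v)) + t * (v \<bullet> (A *v u)) + t\<^sup>2 * (v \<bullet> (A *v v))"
      by (simp add: matrix_vector_right_distrib matrix_vector_mult_scaleR inner_add_left inner_add_right power2_eq_square algebra_simps)
    finally show ?thesis using sym[of v u] by simp
  qed
  show ?thesis
  proof (cases "v \<bullet> (A *v v) = 0")
    case True
    have "u \<bullet> (A *v v) = 0"
    proof (rule ccontr)
      assume nz: "u \<bullet> (A *v v) \<noteq> 0"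
      define t where "t = - (u \<bullet> (A *v u) + 1) / (2 * (u \<bullet> (A *v v)))"
      have "0 \<le> u \<bullet> (A *v u) + 2 * t * (u \<bullet> (A *v v))" using q[of t] True by simp
      also have "2 * t * (u \<bullet> (A *v v)) = - (u \<bullet> (A *v u) + 1)" using nz by (simp add: t_def)
      finally show False by simp
    qed
    then show ?thesis using True by simp
  next
    case False
    then have c: "v \<bullet> (A *v v) > 0" using pos[of v] by simp
    define t where "t = - (u \<bullet> (A *v v)) / (v \<bullet> (A *v v))"
    have "0 \<le> u \<bullet> (A *v u) + 2 * t * (u \<bullet> (A *v v)) + t\<^sup>2 * (v \<bullet> (A *v v))" by (rule q)
    also have "\<dots> = u \<bullet> (A *v u) - (u \<bullet> (A *v v))\<^sup>2 / (v \<bullet> (A *v v))"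
      using c by (simp add: t_def power2_eq_square field_simps)
    finally show ?thesis using c by (simp add: field_simps)
  qed
qed

lemma psd_norm:
  fixes A :: "real^'d^'d"
  assumes sym: "\<And>u v. u \<bullet> (A *v v) = v \<bullet> (A *v u)"
    and pos: "\<And>v. 0 \<le> v \<bullet> (A *v v)"
    and up: "\<And>v. v \<bullet> (A *v v) \<le> L * (norm v)\<^sup>2"
  shows "norm (A *v v) \<le> L * norm v"
proof -
  have L0: "0 \<le> L"
  proof -
    define e :: "real^'d" where "e = axis undefined 1"
    have "0 \<le> L * (norm e)\<^sup>2" using up[of e] pos[of e] by linarith
    then show ?thesis by (simp add: e_def)
  qed
  define w where "w = A *v v"
  have "(w \<bullet> w)\<^sup>2 \<le> (w \<bullet> (A *v w)) * (v \<bullet> (A *v v))"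
    using psd_cs[OF sym pos, of w v] by (simp add: w_def)
  also have "\<dots> \<le> (L * (norm w)\<^sup>2) * (L * (norm v)\<^sup>2)"
  proof (rule mult_mono)
    show "0 \<le> L * (norm w)\<^sup>2" using up[of w] pos[of w] by linarith
  qed (use up pos in auto)
  finally have "((norm w)\<^sup>2)\<^sup>2 \<le> (L * norm w * norm v)\<^sup>2"
    by (simp add: power2_norm_eq_inner[symmetric] power2_eq_square algebra_simps)
  then have "(norm w)\<^sup>2 \<le> L * norm w * norm v"
    using abs_le_square_iff[of "(norm w)\<^sup>2" "L * norm w * norm v"] L0 by simp
  then show ?thesis
    using L0 by (cases "w = 0") (auto simp: w_def power2_eq_square mult.assoc mult_le_cancel_left)
qed



lemma sum_mat_vec:
  fixes A :: "'i \<Rightarrow> real^'d^'d"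
  assumes "finite S"
  shows "(\<Sum>i\<in>S. c i *\<^sub>R A i) *v v = (\<Sum>i\<in>S. c i *\<^sub>R (A i *v v))"
  using assms by (induction S rule: finite_induct)
    (auto simp: matrix_vector_mult_add_rdistrib scaleR_matrix_vector_assoc)

locale mo =
  fixes f :: "'n::finite \<Rightarrow> real^'d \<Rightarrow> real"
    and grad :: "'n \<Rightarrow> real^'d \<Rightarrow> real^'d"
    and hess :: "'n \<Rightarrow> real^'d \<Rightarrow> real^'d^'d"
    and \<mu> L LH :: real
  assumes mu_pos: "0 < \<mu>" and mu_le_L: "\<mu> \<le> L"
    and grad: "\<And>i x. (f i has_derivative (\<lambda>h. grad i x \<bullet> h)) (at x)"
    and hess: "\<And>i x. (grad i has_derivative (\<lambda>h. hess i x *v h)) (at x)"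
    and hess_bounds: "\<And>i x v. \<mu> * (norm v)\<^sup>2 \<le> v \<bullet> (hess i x *v v) \<and> v \<bullet> (hess i x *v v) \<le> L * (norm v)\<^sup>2"
    and hess_lip: "\<And>i x y. onorm (\<lambda>v. (hess i x - hess i y) *v v) \<le> LH * dist x y"
begin

definition gb :: "real^'n \<Rightarrow> real^'d \<Rightarrow> real^'d" where
  "gb \<beta> x = (\<Sum>i\<in>UNIV. (\<beta> $ i) *\<^sub>R grad i x)"

definition Hb :: "real^'n \<Rightarrow> real^'d \<Rightarrow> real^'d^'d" where
  "Hb \<beta> x = (\<Sum>i\<in>UNIV. (\<beta> $ i) *\<^sub>R hess i x)"

definition Gm :: "real^'d \<Rightarrow> real^'n^'d" where
  "Gm x = (\<chi> j k. grad k x $ j)"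

lemma L0: "0 \<le> L" using mu_pos mu_le_L by simp
lemma LH0: "0 \<le> LH" by (rule LH_nonneg[OF hess_lip])

lemma hsym: "u \<bullet> (hess i x *v v) = v \<bullet> (hess i x *v u)"
  by (rule hess_sym_gen[OF grad hess hess_lip])

lemma hnorm: "norm (hess i x *v v) \<le> L * norm v"
proof (rule psd_norm)
  show "0 \<le> v \<bullet> (hess i x *v v)" for v
    using hess_bounds[of v i x] mu_pos by (smt (verit) zero_le_power2 mult_nonneg_nonneg)
qed (use hsym hess_bounds in auto)

lemma Hb_vec: "Hb \<beta> x *v v = (\<Sum>i\<in>UNIV. (\<beta> $ i) *\<^sub>R (hess i x *v v))"
  unfolding Hb_def by (rule sum_mat_vec) simp

lemma Gm_vec: "Gm x *v z = gb z x"
  by (simp add: vec_eq_iff Gm_def gb_def matrix_vector_mult_def sum_component mult.commute)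

lemma gb_diff: "gb \<beta>1 x - gb \<beta>2 x = gb (\<beta>1 - \<beta>2) x"
  by (simp add: gb_def sum_subtractf scaleR_diff_left)

lemma Hb_diff: "Hb \<beta>1 x - Hb \<beta>2 x = Hb (\<beta>1 - \<beta>2) x"
  by (simp add: Hb_def sum_subtractf scaleR_diff_left)

lemma gb_deriv: "(gb \<beta> has_derivative (\<lambda>h. Hb \<beta> x *v h)) (at x)"
proof -
  have "((\<lambda>x. \<Sum>i\<in>UNIV. (\<beta> $ i) *\<^sub>R grad i x) has_derivative (\<lambda>h. \<Sum>i\<in>UNIV. (\<beta> $ i) *\<^sub>R (hess i x *v h))) (at x)"
    by (intro has_derivative_sum has_derivative_scaleR_right hess)
  then show ?thesis by (simp add: gb_def[abs_def] Hb_vec)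
qed

lemma fb_deriv: "(fbeta f \<beta> has_derivative (\<lambda>h. gb \<beta> x \<bullet> h)) (at x)"
proof -
  have "((\<lambda>x. \<Sum>i\<in>UNIV. \<beta> $ i * f i x) has_derivative (\<lambda>h. \<Sum>i\<in>UNIV. \<beta> $ i * (grad i x \<bullet> h))) (at x)"
    by (intro has_derivative_sum has_derivative_mult_right grad)
  then show ?thesis by (simp add: fbeta_def[abs_def] gb_def inner_sum_left)
qed

lemma gb_norm: "norm (gb \<delta> x) \<le> (\<Sum>i\<in>UNIV. \<bar>\<delta> $ i\<bar> * norm (grad i x))"
  unfolding gb_def by (rule order_trans[OF norm_sum]) simp

lemma Hb_quad:
  assumes "\<forall>i. 0 \<le> \<beta> $ i"
  shows "\<mu> * sum (($) \<beta>) UNIV * (norm v)\<^sup>2 \<le> v \<bullet> (Hb \<beta> x *v v)"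
proof -
  have "v \<bullet> (Hb \<beta> x *v v) = (\<Sum>i\<in>UNIV. \<beta> $ i * (v \<bullet> (hess i x *v v)))"
    by (simp add: Hb_vec inner_sum_right)
  also have "\<dots> \<ge> (\<Sum>i\<in>UNIV. \<beta> $ i * (\<mu> * (norm v)\<^sup>2))"
    using assms hess_bounds by (intro sum_mono mult_left_mono) auto
  also have "(\<Sum>i\<in>UNIV. \<beta> $ i * (\<mu> * (norm v)\<^sup>2)) = \<mu> * sum (($) \<beta>) UNIV * (norm v)\<^sup>2"
    using sum_distrib_right[of "($) \<beta>" UNIV "\<mu> * (norm v)\<^sup>2", symmetric] by (simp add: mult_ac)
  finally show ?thesis .
qed

lemma Hb_norm: "norm (Hb \<delta> x *v v) \<le> (\<Sum>i\<in>UNIV. \<bar>\<delta> $ i\<bar>) * L * norm v"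
proof -
  have "norm (Hb \<delta> x *v v) \<le> (\<Sum>i\<in>UNIV. \<bar>\<delta> $ i\<bar> * norm (hess i x *v v))"
    unfolding Hb_vec by (rule order_trans[OF norm_sum]) simp
  also have "\<dots> \<le> (\<Sum>i\<in>UNIV. \<bar>\<delta> $ i\<bar> * (L * norm v))"
    using hnorm by (intro sum_mono mult_left_mono) auto
  finally show ?thesis by (simp add: sum_distrib_right mult.assoc)
qed

lemma grad_lip: "norm (grad i x - grad i y) \<le> L * norm (x - y)"
proof (rule differentiable_bound[where S = UNIV and f' = "\<lambda>x h. hess i x *v h"])
  show "(grad i has_derivative (*v) (hess i x)) (at x within UNIV)" for x
    using hess[of i x] by simp
  show "onorm ((*v) (hess i x)) \<le> L" for x
    using hnorm L0 by (intro onorm_bound) auto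
qed auto

lemma posorth_sum:
  assumes "\<beta> \<in> posorth" shows "0 < sum (($) \<beta>) UNIV"
proof -
  have nn: "\<forall>i. 0 \<le> \<beta> $ i" and nz: "\<beta> \<noteq> 0" using assms by (auto simp: posorth_def)
  then obtain j where "\<beta> $ j \<noteq> 0" by (auto simp: vec_eq_iff)
  then have "0 < \<beta> $ j" using nn by (simp add: order_le_neq_trans)
  also have "\<beta> $ j \<le> sum (($) \<beta>) UNIV"
    using nn by (intro member_le_sum) auto
  finally show ?thesis .
qed

lemma simplex_posorth: "\<beta> \<in> std_simplex \<Longrightarrow> \<beta> \<in> posorth"
  by (auto simp: std_simplex_def posorth_def)

end


context mo begin

lemma gb_mono:
  assumes "\<beta> \<in> posorth"
  shows "\<mu> * sum (($) \<beta>) UNIV * (norm (x - y))\<^sup>2 \<le> (gb \<beta> x - gb \<beta> y) \<bullet> (x - y)"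
  by (rule strong_mono[where H = "\<lambda>x h. Hb \<beta> x *v h", OF gb_deriv Hb_quad]) (use assms in \<open>auto simp: posorth_def\<close>)

lemma grad_zero_unique:
  assumes "\<beta> \<in> posorth" "gb \<beta> x = 0" "gb \<beta> y = 0"
  shows "x = y"
proof -
  have "\<mu> * sum (($) \<beta>) UNIV * (norm (x - y))\<^sup>2 \<le> 0" using gb_mono[OF assms(1), of x y] assms by simp
  moreover have "0 < \<mu> * sum (($) \<beta>) UNIV" using mu_pos posorth_sum[OF assms(1)] by simp
  ultimately have "(norm (x - y))\<^sup>2 \<le> 0" using mult_le_cancel_left_pos[of "\<mu> * sum (($) \<beta>) UNIV" "(norm (x - y))\<^sup>2" 0] by simp
  then show ?thesis by simp
qed

lemma min_grad_zero:
  assumes "\<forall>y. fbeta f \<beta> x \<le> fbeta f \<beta> y"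
  shows "gb \<beta> x = 0"
proof -
  have "(\<lambda>h. gb \<beta> x \<bullet> h) = (\<lambda>v. 0)"
    by (rule differential_zero_maxmin[of x UNIV, OF _ _ fb_deriv]) (use assms in auto)
  then have "gb \<beta> x \<bullet> gb \<beta> x = 0" by metis
  then show ?thesis by simp
qed

lemma min_exists:
  assumes "\<beta> \<in> posorth"
  shows "\<exists>x. \<forall>y. fbeta f \<beta> x \<le> fbeta f \<beta> y"
proof -
  define m where "m = \<mu> * sum (($) \<beta>) UNIV"
  have m: "0 < m" using mu_pos posorth_sum[OF assms] by (simp add: m_def)
  define F where "F = fbeta f \<beta>"
  have ql: "F 0 + gb \<beta> 0 \<bullet> y + m / 2 * (norm y)\<^sup>2 \<le> F y" for y
    unfolding F_def m_def
    by (rule quad_lower[where H = "\<lambda>x h. Hb \<beta> x *v h", OF fb_deriv gb_deriv Hb_quad]) (use assms in \<open>auto simp: posorth_def\<close>)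
  define r where "r = 2 * norm (gb \<beta> 0) / m + 1"
  have cont: "continuous_on (cball 0 r) F"
    unfolding F_def using fb_deriv
    by (intro continuous_at_imp_continuous_on ballI has_derivative_continuous) blast
  have r0: "0 \<le> r" using m by (simp add: r_def)
  obtain x where xin: "x \<in> cball 0 r" and xmin: "\<forall>y\<in>cball 0 r. F x \<le> F y"
    using continuous_attains_inf[OF compact_cball _ cont] r0 by auto
  have "F x \<le> F y" for y
  proof (cases "y \<in> cball 0 r")
    case True then show ?thesis using xmin by auto
  next
    case False
    then have ny: "norm y > r" by simp
    have "F x \<le> F 0" using xmin r0 by auto
    also have "F 0 < F 0 + gb \<beta> 0 \<bullet> y + m / 2 * (norm y)\<^sup>2"
    proof -
      have "- (gb \<beta> 0 \<bullet> y) \<le> norm (gb \<beta> 0) * norm y"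
        using Cauchy_Schwarz_ineq2[of "gb \<beta> 0" y] by linarith
      also have "norm (gb \<beta> 0) * norm y < m / 2 * (norm y) * norm y"
      proof (rule mult_strict_right_mono)
        have "2 * norm (gb \<beta> 0) / m < norm y" using ny by (simp add: r_def)
        then show "norm (gb \<beta> 0) < m / 2 * norm y" using m by (simp add: field_simps)
        show "0 < norm y" using ny r0 by linarith
      qed
      finally show ?thesis by (simp add: power2_eq_square mult.assoc)
    qed
    also have "\<dots> \<le> F y" by (rule ql)
    finally show ?thesis by simp
  qed
  then show ?thesis unfolding F_def by blast
qed

lemma xs_min:
  assumes "\<beta> \<in> posorth"
  shows "\<forall>y. fbeta f \<beta> (xstar f \<beta>) \<le> fbeta f \<beta> y"
proof -
  obtain x where x: "\<forall>y. fbeta f \<beta> x \<le> fbeta f \<beta> y" using min_exists[OF assms] by blast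
  have "xstar f \<beta> = x"
    unfolding xstar_def
  proof (rule the_equality)
    fix z assume z: "\<forall>y. fbeta f \<beta> z \<le> fbeta f \<beta> y"
    show "z = x" using grad_zero_unique[OF assms min_grad_zero[OF z] min_grad_zero[OF x]] .
  qed (rule x)
  then show ?thesis using x by simp
qed

lemma xs_grad: "\<beta> \<in> posorth \<Longrightarrow> gb \<beta> (xstar f \<beta>) = 0"
  by (rule min_grad_zero[OF xs_min])

lemma xs_unique: "\<beta> \<in> posorth \<Longrightarrow> gb \<beta> y = 0 \<Longrightarrow> y = xstar f \<beta>"
  using grad_zero_unique xs_grad by blast

lemma xs_pareto:
  assumes "\<beta> \<in> std_simplex"
  shows "xstar f \<beta> \<in> pareto_set f"
proof -
  have po: "\<beta> \<in> posorth" by (rule simplex_posorth[OF assms])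
  have nn: "\<forall>i. 0 \<le> \<beta> $ i" using assms by (simp add: std_simplex_def)
  let ?x = "xstar f \<beta>"
  show ?thesis unfolding pareto_set_def pareto_optimal_def
  proof (clarsimp)
    fix y i assume le: "\<forall>i. f i y \<le> f i ?x" and lt: "f i y < f i ?x"
    have "fbeta f \<beta> y \<le> fbeta f \<beta> ?x"
      unfolding fbeta_def using nn le by (intro sum_mono mult_left_mono) auto
    then have "\<forall>z. fbeta f \<beta> y \<le> fbeta f \<beta> z" using xs_min[OF po] by (meson order_trans)
    then have "y = ?x" using xs_unique[OF po min_grad_zero] by blast
    then show False using lt by simp
  qed
qed

lemma pareto_bounded: "bounded (pareto_set f)"
proof -
  define B where "B = (\<Sum>i\<in>UNIV. 2 * norm (grad i 0) / \<mu>)"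
  have "norm x \<le> B" if x: "x \<in> pareto_set f" for x
  proof -
    have "\<exists>i. f i x \<le> f i 0"
    proof (rule ccontr)
      assume "\<not> ?thesis"
      then have "\<forall>i. f i 0 < f i x" by (simp add: not_le)
      then have "(\<forall>i. f i 0 \<le> f i x) \<and> (\<exists>i. f i 0 < f i x)" by (auto intro: less_imp_le)
      then show False using x unfolding pareto_set_def pareto_optimal_def by blast
    qed
    then obtain i where i: "f i x \<le> f i 0" by blast
    have ql: "f i 0 + grad i 0 \<bullet> x + \<mu> / 2 * (norm x)\<^sup>2 \<le> f i x"
      by (rule quad_lower[where H = "\<lambda>x h. hess i x *v h", OF grad hess]) (use hess_bounds in auto)
    have "\<mu> / 2 * (norm x)\<^sup>2 \<le> norm (grad i 0) * norm x"
      using ql i Cauchy_Schwarz_ineq2[of "grad i 0" x] by linarith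
    then have "norm x \<le> 2 * norm (grad i 0) / \<mu>"
    proof (cases "norm x = 0")
      case True then show ?thesis using mu_pos by simp
    next
      case False
      then have nx: "0 < norm x" by simp
      assume h: "\<mu> / 2 * (norm x)\<^sup>2 \<le> norm (grad i 0) * norm x"
      then have "(\<mu> / 2 * norm x) * norm x \<le> norm (grad i 0) * norm x" by (simp add: power2_eq_square mult.assoc)
      then have "\<mu> / 2 * norm x \<le> norm (grad i 0)" using nx by simp
      then show ?thesis using mu_pos by (simp add: field_simps)
    qed
    also have "\<dots> \<le> B" unfolding B_def
      by (rule member_le_sum) (use mu_pos in auto)
    finally show ?thesis .
  qed
  then show ?thesis by (intro boundedI) blast
qed

abbreviation "R \<equiv> diameter (pareto_set f)"

lemma R0: "0 \<le> R" by (rule diameter_ge_0[OF pareto_bounded])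

lemma axis_simplex: "axis i 1 \<in> std_simplex"
  by (auto simp: std_simplex_def axis_def)

lemma gb_axis: "gb (axis i 1) x = grad i x"
proof -
  have "gb (axis i 1) x = (\<Sum>j\<in>UNIV. if j = i then grad j x else 0)"
    unfolding gb_def by (rule sum.cong) (simp_all add: axis_def)
  then show ?thesis by simp
qed

lemma grad_bound:
  assumes "\<beta> \<in> std_simplex"
  shows "norm (grad i (xstar f \<beta>)) \<le> L * R"
proof -
  let ?e = "axis i (1::real) :: real^'n"
  have "grad i (xstar f ?e) = 0" using xs_grad[OF simplex_posorth[OF axis_simplex]] by (simp add: gb_axis)
  then have "norm (grad i (xstar f \<beta>)) = norm (grad i (xstar f \<beta>) - grad i (xstar f ?e))" by simp
  also have "\<dots> \<le> L * norm (xstar f \<beta> - xstar f ?e)" by (rule grad_lip)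
  also have "\<dots> \<le> L * R"
    using diameter_bounded_bound[OF pareto_bounded xs_pareto[OF assms] xs_pareto[OF axis_simplex]] L0
    by (simp add: dist_norm mult_left_mono)
  finally show ?thesis .
qed

end


lemma neg_mat_vec: "(- A) *v x = - (A *v (x::real^'m))"
  for A :: "real^'m^'k"
  by (simp add: vec_eq_iff matrix_vector_mult_def sum_negf)

context mo begin

lemma lip_gen:
  assumes b1: "\<beta>1 \<in> posorth" and b2: "\<beta>2 \<in> posorth"
  shows "\<mu> * sum (($) \<beta>1) UNIV * norm (xstar f \<beta>1 - xstar f \<beta>2) \<le> norm (gb (\<beta>1 - \<beta>2) (xstar f \<beta>2))"
proof -
  let ?x1 = "xstar f \<beta>1" and ?x2 = "xstar f \<beta>2"
  let ?c = "\<mu> * sum (($) \<beta>1) UNIV"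
  have "?c * (norm (?x1 - ?x2))\<^sup>2 \<le> (gb \<beta>1 ?x1 - gb \<beta>1 ?x2) \<bullet> (?x1 - ?x2)" by (rule gb_mono[OF b1])
  also have "gb \<beta>1 ?x1 - gb \<beta>1 ?x2 = - gb (\<beta>1 - \<beta>2) ?x2"
    using xs_grad[OF b1] xs_grad[OF b2] gb_diff[of \<beta>1 ?x2 \<beta>2] by simp
  also have "- gb (\<beta>1 - \<beta>2) ?x2 \<bullet> (?x1 - ?x2) \<le> norm (gb (\<beta>1 - \<beta>2) ?x2) * norm (?x1 - ?x2)"
    using Cauchy_Schwarz_ineq2[of "gb (\<beta>1 - \<beta>2) ?x2" "?x1 - ?x2"] by simp
  finally have h: "(?c * norm (?x1 - ?x2)) * norm (?x1 - ?x2) \<le> norm (gb (\<beta>1 - \<beta>2) ?x2) * norm (?x1 - ?x2)"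
    by (simp add: power2_eq_square mult.assoc)
  show ?thesis
  proof (cases "norm (?x1 - ?x2) = 0")
    case True then show ?thesis by simp
  next
    case False
    then have "0 < norm (?x1 - ?x2)" by simp
    with h show ?thesis by simp
  qed
qed

lemma gb_l1:
  assumes "\<beta> \<in> std_simplex"
  shows "norm (gb \<delta> (xstar f \<beta>)) \<le> l1norm \<delta> * (L * R)"
proof -
  have "norm (gb \<delta> (xstar f \<beta>)) \<le> (\<Sum>i\<in>UNIV. \<bar>\<delta> $ i\<bar> * norm (grad i (xstar f \<beta>)))" by (rule gb_norm)
  also have "\<dots> \<le> (\<Sum>i\<in>UNIV. \<bar>\<delta> $ i\<bar> * (L * R))"
    using grad_bound[OF assms] by (intro sum_mono mult_left_mono) auto
  finally show ?thesis by (simp add: l1norm_def sum_distrib_right)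
qed

lemma simplex_sum: "\<beta> \<in> std_simplex \<Longrightarrow> sum (($) \<beta>) UNIV = 1"
  by (simp add: std_simplex_def)

lemma M0_bound:
  assumes b1: "\<beta>1 \<in> std_simplex" and b2: "\<beta>2 \<in> std_simplex"
  shows "norm (xstar f \<beta>1 - xstar f \<beta>2) \<le> L / \<mu> * R * l1norm (\<beta>1 - \<beta>2)"
proof -
  have "\<mu> * norm (xstar f \<beta>1 - xstar f \<beta>2) \<le> l1norm (\<beta>1 - \<beta>2) * (L * R)"
    using lip_gen[OF simplex_posorth[OF b1] simplex_posorth[OF b2]] gb_l1[OF b2, of "\<beta>1 - \<beta>2"]
    by (simp add: simplex_sum[OF b1])
  then show ?thesis using mu_pos by (simp add: field_simps)
qed

lemma Hb_lower:
  assumes "\<beta> \<in> posorth"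
  shows "\<mu> * sum (($) \<beta>) UNIV * norm v \<le> norm (Hb \<beta> x *v v)"
proof -
  have "(\<mu> * sum (($) \<beta>) UNIV * norm v) * norm v \<le> v \<bullet> (Hb \<beta> x *v v)"
    using Hb_quad[of \<beta> v x] assms by (simp add: posorth_def power2_eq_square mult.assoc)
  also have "\<dots> \<le> norm (Hb \<beta> x *v v) * norm v"
    using Cauchy_Schwarz_ineq2[of v "Hb \<beta> x *v v"] by (simp add: mult.commute)
  finally have h: "(\<mu> * sum (($) \<beta>) UNIV * norm v) * norm v \<le> norm (Hb \<beta> x *v v) * norm v" .
  show ?thesis
  proof (cases "norm v = 0")
    case True then show ?thesis by simp
  next
    case False
    then have "0 < norm v" by simp
    with h show ?thesis by simp
  qed
qed

lemma Hb_inv: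
  assumes "\<beta> \<in> posorth"
  shows "Hb \<beta> x ** matrix_inv (Hb \<beta> x) = mat 1"
proof -
  let ?A = "Hb \<beta> x"
  have c: "0 < \<mu> * sum (($) \<beta>) UNIV" using mu_pos posorth_sum[OF assms] by simp
  have "inj ((*v) ?A)"
  proof (rule injI)
    fix u v assume "?A *v u = ?A *v v"
    then have "?A *v (u - v) = 0" by (simp add: matrix_vector_mult_diff_distrib)
    then have "\<mu> * sum (($) \<beta>) UNIV * norm (u - v) \<le> 0" using Hb_lower[OF assms, of "u - v" x] by simp
    then have "norm (u - v) \<le> 0" using c mult_le_cancel_left_pos[of "\<mu> * sum (($) \<beta>) UNIV" "norm (u - v)" 0] by simp
    then show "u = v" by simp
  qed
  then obtain B where "B ** ?A = mat 1" using matrix_left_invertible_injective by blast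
  then have "?A ** B = mat 1 \<and> B ** ?A = mat 1" using matrix_left_right_inverse by blast
  then have "?A ** matrix_inv ?A = mat 1 \<and> matrix_inv ?A ** ?A = mat 1"
    unfolding matrix_inv_def by (rule someI)
  then show ?thesis by simp
qed

definition Dm :: "real^'n \<Rightarrow> real^'n^'d" where
  "Dm \<beta> = - (matrix_inv (Hb \<beta> (xstar f \<beta>)) ** Gm (xstar f \<beta>))"

lemma D_eq:
  assumes "\<beta> \<in> posorth"
  shows "Hb \<beta> (xstar f \<beta>) *v (Dm \<beta> *v z) = - gb z (xstar f \<beta>)"
proof -
  let ?A = "Hb \<beta> (xstar f \<beta>)"
  have "Dm \<beta> *v z = - (matrix_inv ?A *v (Gm (xstar f \<beta>) *v z))"
    by (simp add: Dm_def neg_mat_vec matrix_vector_mul_assoc)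
  then have "?A *v (Dm \<beta> *v z) = - (?A *v (matrix_inv ?A *v (Gm (xstar f \<beta>) *v z)))"
    by (simp add: vec.neg)
  also have "?A *v (matrix_inv ?A *v y) = y" for y
    by (simp only: matrix_vector_mul_assoc Hb_inv[OF assms] matrix_vector_mul_lid)
  finally show ?thesis by (simp add: Gm_vec)
qed

end


lemma l1_le: "l1norm (\<delta>::real^'n::finite) \<le> real CARD('n) * norm \<delta>"
proof -
  have "l1norm \<delta> \<le> (\<Sum>i\<in>(UNIV::'n set). norm \<delta>)"
    unfolding l1norm_def by (rule sum_mono) (metis component_le_norm_cart real_norm_def)
  then show ?thesis by simp
qed

lemma l1_nonneg: "0 \<le> l1norm \<delta>"
  unfolding l1norm_def by (simp add: sum_nonneg)

context mo begin

lemma local_est: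
  assumes b0: "\<beta>0 \<in> std_simplex" and b: "\<beta> \<in> posorth"
    and small: "l1norm (\<beta> - \<beta>0) < 1/2"
  shows "\<mu> * norm (xstar f \<beta> - xstar f \<beta>0 - Dm \<beta>0 *v (\<beta> - \<beta>0))
     \<le> (l1norm (\<beta> - \<beta>0))\<^sup>2 * (2 * L * (\<Sum>i\<in>UNIV. norm (grad i (xstar f \<beta>0))) / \<mu>
         + 8 * LH * (\<Sum>i\<in>UNIV. norm (grad i (xstar f \<beta>0)))\<^sup>2 / \<mu>\<^sup>2)"
proof -
  define x0 where "x0 = xstar f \<beta>0"
  define x where "x = xstar f \<beta>"
  define \<delta> where "\<delta> = \<beta> - \<beta>0"
  define ll where "ll = l1norm \<delta>"
  define G0 where "G0 = (\<Sum>i\<in>UNIV. norm (grad i x0))"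
  define s where "s = sum (($) \<beta>) UNIV"
  define H0 where "H0 = Hb \<beta>0 x0"
  define e where "e = x - x0 - Dm \<beta>0 *v \<delta>"
  have p0: "\<beta>0 \<in> posorth" by (rule simplex_posorth[OF b0])
  have nnb: "\<forall>i. 0 \<le> \<beta> $ i" using b by (simp add: posorth_def)
  have l0: "0 \<le> ll" by (simp add: ll_def l1_nonneg)
  have lsmall: "ll < 1/2" using small by (simp add: ll_def \<delta>_def)
  have G00: "0 \<le> G0" by (simp add: G0_def sum_nonneg)
  have s_eq: "s = 1 + sum (($) \<delta>) UNIV"
    using simplex_sum[OF b0] by (simp add: s_def \<delta>_def sum_subtractf)
  have "\<bar>sum (($) \<delta>) UNIV\<bar> \<le> ll" unfolding ll_def l1norm_def by (rule sum_abs)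
  then have s_lo: "1/2 \<le> s" and s_hi: "s \<le> 2" using s_eq lsmall by linarith+
  have "\<mu> * s * norm (x - x0) \<le> norm (gb \<delta> x0)"
    using lip_gen[OF b p0] by (simp add: s_def x_def x0_def \<delta>_def)
  also have "\<dots> \<le> (\<Sum>i\<in>UNIV. \<bar>\<delta> $ i\<bar> * norm (grad i x0))" by (rule gb_norm)
  also have "\<dots> \<le> (\<Sum>i\<in>UNIV. \<bar>\<delta> $ i\<bar> * G0)"
    unfolding G0_def by (intro sum_mono mult_left_mono member_le_sum) auto
  also have "\<dots> = ll * G0" by (simp add: ll_def l1norm_def sum_distrib_right)
  finally have lipx: "\<mu> * s * norm (x - x0) \<le> ll * G0" .
  have dx: "norm (x - x0) \<le> 2 * ll * G0 / \<mu>"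
  proof -
    have "\<mu> / 2 * norm (x - x0) \<le> \<mu> * s * norm (x - x0)"
      using s_lo mu_pos by (intro mult_right_mono) auto
    then have "\<mu> / 2 * norm (x - x0) \<le> ll * G0" using lipx by linarith
    then show ?thesis using mu_pos by (simp add: field_simps)
  qed
  define r where "r i = grad i x - grad i x0 - hess i x0 *v (x - x0)" for i
  define \<rho> where "\<rho> = (\<Sum>i\<in>UNIV. (\<beta> $ i) *\<^sub>R r i)"
  have gdiff: "gb \<beta> x - gb \<beta> x0 = Hb \<beta> x0 *v (x - x0) + \<rho>"
  proof -
    have "gb \<beta> x - gb \<beta> x0 = (\<Sum>i\<in>UNIV. (\<beta> $ i) *\<^sub>R (grad i x - grad i x0))"
      by (simp add: gb_def sum_subtractf scaleR_diff_right)
    moreover have "Hb \<beta> x0 *v (x - x0) + \<rho> = (\<Sum>i\<in>UNIV. (\<beta> $ i) *\<^sub>R (hess i x0 *v (x - x0)) + (\<beta> $ i) *\<^sub>R r i)"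
      by (simp add: Hb_vec \<rho>_def sum.distrib)
    moreover have "(\<Sum>i\<in>UNIV. (\<beta> $ i) *\<^sub>R (grad i x - grad i x0)) = (\<Sum>i\<in>UNIV. (\<beta> $ i) *\<^sub>R (hess i x0 *v (x - x0)) + (\<beta> $ i) *\<^sub>R r i)"
      by (rule sum.cong) (simp_all add: r_def algebra_simps)
    ultimately show ?thesis by simp
  qed
  have He: "H0 *v e = Hb (\<beta>0 - \<beta>) x0 *v (x - x0) - \<rho>"
  proof -
    have "H0 *v e = H0 *v (x - x0) - H0 *v (Dm \<beta>0 *v \<delta>)"
      by (simp add: e_def matrix_vector_mult_diff_distrib)
    also have "H0 *v (Dm \<beta>0 *v \<delta>) = - gb \<delta> x0"
      unfolding H0_def x0_def by (rule D_eq[OF p0])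
    also have "gb \<delta> x0 = gb \<beta> x0 - gb \<beta>0 x0" by (simp add: gb_diff \<delta>_def)
    also have "gb \<beta>0 x0 = 0" unfolding x0_def by (rule xs_grad[OF p0])
    also have "gb \<beta> x = 0" unfolding x_def by (rule xs_grad[OF b])
    then have "gb \<beta> x0 = - (Hb \<beta> x0 *v (x - x0) + \<rho>)" using gdiff by (simp add: algebra_simps)
    finally have "H0 *v e = H0 *v (x - x0) - Hb \<beta> x0 *v (x - x0) - \<rho>" by simp
    also have "\<dots> = (H0 - Hb \<beta> x0) *v (x - x0) - \<rho>" by (simp add: matrix_vector_mult_diff_rdistrib)
    finally show ?thesis by (simp add: H0_def Hb_diff)
  qed
  have n1: "norm (Hb (\<beta>0 - \<beta>) x0 *v (x - x0)) \<le> ll * L * norm (x - x0)"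
  proof -
    have "(\<Sum>i\<in>UNIV. \<bar>(\<beta>0 - \<beta>) $ i\<bar>) = ll"
      by (simp add: ll_def l1norm_def \<delta>_def abs_minus_commute)
    then show ?thesis using Hb_norm[of "\<beta>0 - \<beta>" x0 "x - x0"] by simp
  qed
  have n2: "norm \<rho> \<le> s * LH * (norm (x - x0))\<^sup>2"
  proof -
    have "norm \<rho> \<le> (\<Sum>i\<in>UNIV. \<bar>\<beta> $ i\<bar> * norm (r i))"
      unfolding \<rho>_def by (rule order_trans[OF norm_sum]) simp
    also have "\<dots> \<le> (\<Sum>i\<in>UNIV. \<beta> $ i * (LH * (norm (x - x0))\<^sup>2))"
      using nnb taylor_grad[OF hess hess_lip] by (intro sum_mono mult_mono) (auto simp: r_def)
    finally show ?thesis by (simp add: s_def sum_distrib_right mult.assoc)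
  qed
  have "\<mu> * norm e \<le> norm (H0 *v e)"
    using Hb_lower[OF p0, of e x0] simplex_sum[OF b0] by (simp add: H0_def)
  also have "\<dots> \<le> ll * L * norm (x - x0) + s * LH * (norm (x - x0))\<^sup>2"
    unfolding He using n1 n2 norm_triangle_ineq4 by (smt (verit))
  also have "\<dots> \<le> ll * L * (2 * ll * G0 / \<mu>) + 2 * LH * (2 * ll * G0 / \<mu>)\<^sup>2"
  proof (rule add_mono)
    show "ll * L * norm (x - x0) \<le> ll * L * (2 * ll * G0 / \<mu>)"
      using dx l0 L0 by (intro mult_left_mono) auto
    have "(norm (x - x0))\<^sup>2 \<le> (2 * ll * G0 / \<mu>)\<^sup>2" using dx by (intro power_mono) auto
    then show "s * LH * (norm (x - x0))\<^sup>2 \<le> 2 * LH * (2 * ll * G0 / \<mu>)\<^sup>2"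
      using s_hi LH0 s_lo by (intro mult_mono) auto
  qed
  also have "\<dots> = ll\<^sup>2 * (2 * L * G0 / \<mu> + 8 * LH * G0\<^sup>2 / \<mu>\<^sup>2)"
    using mu_pos by (simp add: field_simps power2_eq_square)
  finally show ?thesis by (simp add: e_def x_def x0_def \<delta>_def ll_def G0_def)
qed

end


context mo begin

lemma xs_deriv:
  assumes b0: "\<beta>0 \<in> std_simplex"
  shows "(xstar f has_derivative (\<lambda>h. Dm \<beta>0 *v h)) (at \<beta>0 within posorth)"
proof -
  define N where "N = real CARD('n)"
  have N1: "1 \<le> N" unfolding N_def
    using card_ge_0_finite[of "UNIV::'n set"] by simp
  define G0 where "G0 = (\<Sum>i\<in>UNIV. norm (grad i (xstar f \<beta>0)))"
  define C where "C = 2 * L * G0 / \<mu> + 8 * LH * G0\<^sup>2 / \<mu>\<^sup>2"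
  have C0: "0 \<le> C" unfolding C_def G0_def using L0 LH0 mu_pos by (simp add: sum_nonneg)
  define K where "K = N\<^sup>2 * C / \<mu>"
  have K0: "0 \<le> K" unfolding K_def using C0 mu_pos by simp
  show ?thesis
    unfolding has_derivative_within_alt
  proof (intro conjI allI impI)
    show "bounded_linear (\<lambda>h. Dm \<beta>0 *v h)" by (simp add: matrix_vector_mul_bounded_linear)
    fix e :: real assume e: "0 < e"
    define d where "d = min (1 / (2 * N)) (e / (K + 1))"
    have d0: "0 < d" using e N1 K0 by (simp add: d_def)
    show "\<exists>d>0. \<forall>y\<in>posorth. norm (y - \<beta>0) < d \<longrightarrow>
            norm (xstar f y - xstar f \<beta>0 - Dm \<beta>0 *v (y - \<beta>0)) \<le> e * norm (y - \<beta>0)"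
    proof (intro exI[of _ d] conjI ballI impI d0)
      fix y assume y: "y \<in> posorth" and yd: "norm (y - \<beta>0) < d"
      let ?n = "norm (y - \<beta>0)"
      have ll: "l1norm (y - \<beta>0) \<le> N * ?n" unfolding N_def by (rule l1_le)
      have "N * ?n < N * (1 / (2 * N))" using yd N1 by (intro mult_strict_left_mono) (auto simp: d_def)
      then have "l1norm (y - \<beta>0) < 1/2" using ll N1 by simp
      then have est: "\<mu> * norm (xstar f y - xstar f \<beta>0 - Dm \<beta>0 *v (y - \<beta>0)) \<le> (l1norm (y - \<beta>0))\<^sup>2 * C"
        using local_est[OF b0 y] by (simp add: C_def G0_def)
      also have "\<dots> \<le> (N * ?n)\<^sup>2 * C"
        using ll C0 l1_nonneg by (intro mult_right_mono power_mono) auto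
      finally have "norm (xstar f y - xstar f \<beta>0 - Dm \<beta>0 *v (y - \<beta>0)) \<le> K * ?n * ?n"
        using mu_pos by (simp add: K_def field_simps power2_eq_square)
      also have "K * ?n * ?n \<le> e * ?n"
      proof (rule mult_right_mono)
        have "K * ?n \<le> K * (e / (K + 1))" using yd K0 by (intro mult_left_mono) (auto simp: d_def)
        also have "\<dots> \<le> e" using K0 e by (simp add: field_simps)
        finally show "K * ?n \<le> e" .
      qed simp
      finally show "norm (xstar f y - xstar f \<beta>0 - Dm \<beta>0 *v (y - \<beta>0)) \<le> e * ?n" .
    qed
  qed
qed

lemma D_lip_vec:
  assumes b1: "\<beta>1 \<in> std_simplex" and b2: "\<beta>2 \<in> std_simplex" and z: "l1norm z = 1"
  shows "norm ((Dm \<beta>1 - Dm \<beta>2) *v z) \<le> 2 * (L / \<mu>)\<^sup>2 * R * (1 + LH * R / \<mu>) * l1norm (\<beta>1 - \<beta>2)"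
proof -
  define x1 where "x1 = xstar f \<beta>1"
  define x2 where "x2 = xstar f \<beta>2"
  define u where "u = Dm \<beta>1 *v z"
  define w where "w = Dm \<beta>2 *v z"
  define ll where "ll = l1norm (\<beta>1 - \<beta>2)"
  define H1 where "H1 = Hb \<beta>1 x1"
  define H2 where "H2 = Hb \<beta>2 x2"
  have p1: "\<beta>1 \<in> posorth" and p2: "\<beta>2 \<in> posorth" using b1 b2 by (auto intro: simplex_posorth)
  have ll0: "0 \<le> ll" by (simp add: ll_def l1_nonneg)
  have Hu: "H1 *v u = - gb z x1" unfolding H1_def u_def x1_def by (rule D_eq[OF p1])
  have Hw: "H2 *v w = - gb z x2" unfolding H2_def w_def x2_def by (rule D_eq[OF p2])
  have dx: "norm (x1 - x2) \<le> L / \<mu> * R * ll"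
    unfolding x1_def x2_def ll_def by (rule M0_bound[OF b1 b2])
  have dx0: "0 \<le> norm (x1 - x2)" by simp
  have "\<mu> * norm w \<le> norm (H2 *v w)"
    using Hb_lower[OF p2, of w x2] simplex_sum[OF b2] by (simp add: H2_def)
  also have "\<dots> = norm (gb z x2)" by (simp add: Hw)
  also have "\<dots> \<le> l1norm z * (L * R)" unfolding x2_def by (rule gb_l1[OF b2])
  finally have nw: "norm w \<le> L * R / \<mu>" using z mu_pos by (simp add: field_simps)
  have H1uw: "H1 *v (u - w) = (gb z x2 - gb z x1) + (H2 - H1) *v w"
    using Hu Hw by (simp add: matrix_vector_mult_diff_distrib matrix_vector_mult_diff_rdistrib)
  have g21: "norm (gb z x2 - gb z x1) \<le> L * norm (x1 - x2)"
  proof -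
    have "gb z x2 - gb z x1 = (\<Sum>i\<in>UNIV. (z $ i) *\<^sub>R (grad i x2 - grad i x1))"
      by (simp add: gb_def sum_subtractf scaleR_diff_right)
    then have "norm (gb z x2 - gb z x1) \<le> (\<Sum>i\<in>UNIV. \<bar>z $ i\<bar> * norm (grad i x2 - grad i x1))"
      by (metis (no_types, lifting) norm_scaleR norm_sum order_trans sum_mono order_refl)
    also have "\<dots> \<le> (\<Sum>i\<in>UNIV. \<bar>z $ i\<bar> * (L * norm (x1 - x2)))"
      using grad_lip by (intro sum_mono mult_left_mono) (auto simp: norm_minus_commute)
    also have "\<dots> = L * norm (x1 - x2)" using z by (simp add: l1norm_def sum_distrib_right[symmetric])
    finally show ?thesis .
  qed
  have H21: "norm ((H2 - H1) *v w) \<le> (LH * norm (x1 - x2) + ll * L) * norm w"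
  proof -
    have "H2 - H1 = (\<Sum>i\<in>UNIV. (\<beta>2 $ i) *\<^sub>R (hess i x2 - hess i x1)) + Hb (\<beta>2 - \<beta>1) x1"
      by (simp add: H1_def H2_def Hb_def sum_subtractf[symmetric] scaleR_diff_right scaleR_diff_left sum.distrib[symmetric] algebra_simps)
    then have eq: "(H2 - H1) *v w = (\<Sum>i\<in>UNIV. (\<beta>2 $ i) *\<^sub>R ((hess i x2 - hess i x1) *v w)) + Hb (\<beta>2 - \<beta>1) x1 *v w"
      by (simp add: matrix_vector_mult_add_rdistrib sum_mat_vec)
    have a: "norm (\<Sum>i\<in>UNIV. (\<beta>2 $ i) *\<^sub>R ((hess i x2 - hess i x1) *v w)) \<le> LH * norm (x1 - x2) * norm w"
    proof -
      have "norm (\<Sum>i\<in>UNIV. (\<beta>2 $ i) *\<^sub>R ((hess i x2 - hess i x1) *v w)) \<le> (\<Sum>i\<in>UNIV. \<bar>\<beta>2 $ i\<bar> * norm ((hess i x2 - hess i x1) *v w))"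
        by (rule order_trans[OF norm_sum]) simp
      also have "\<dots> \<le> (\<Sum>i\<in>UNIV. \<bar>\<beta>2 $ i\<bar> * (LH * norm (x1 - x2) * norm w))"
      proof (intro sum_mono mult_left_mono)
        fix i
        show "norm ((hess i x2 - hess i x1) *v w) \<le> LH * norm (x1 - x2) * norm w"
          using matnorm_lip[OF hess_lip, where x=x2 and y=x1 and v=w] by (simp add: norm_minus_commute)
      qed simp
      also have "\<dots> = LH * norm (x1 - x2) * norm w"
        using b2 by (simp add: std_simplex_def sum_distrib_right[symmetric])
      finally show ?thesis .
    qed
    have b: "norm (Hb (\<beta>2 - \<beta>1) x1 *v w) \<le> ll * L * norm w"
    proof -
      have "(\<Sum>i\<in>UNIV. \<bar>(\<beta>2 - \<beta>1) $ i\<bar>) = ll"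
        by (simp add: ll_def l1norm_def abs_minus_commute)
      then show ?thesis using Hb_norm[of "\<beta>2 - \<beta>1" x1 w] by simp
    qed
    show ?thesis unfolding eq using a b norm_triangle_ineq[of "\<Sum>i\<in>UNIV. (\<beta>2 $ i) *\<^sub>R ((hess i x2 - hess i x1) *v w)" "Hb (\<beta>2 - \<beta>1) x1 *v w"]
      by (simp add: algebra_simps)
  qed
  have "\<mu> * norm (u - w) \<le> norm (H1 *v (u - w))"
    using Hb_lower[OF p1, of "u - w" x1] simplex_sum[OF b1] by (simp add: H1_def)
  also have "\<dots> \<le> L * norm (x1 - x2) + (LH * norm (x1 - x2) + ll * L) * norm w"
    unfolding H1uw using g21 H21 norm_triangle_ineq by (smt (verit))
  also have "\<dots> \<le> L * (L / \<mu> * R * ll) + (LH * (L / \<mu> * R * ll) + ll * L) * (L * R / \<mu>)"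
  proof (rule add_mono)
    show "L * norm (x1 - x2) \<le> L * (L / \<mu> * R * ll)" using dx L0 by (rule mult_left_mono)
    show "(LH * norm (x1 - x2) + ll * L) * norm w \<le> (LH * (L / \<mu> * R * ll) + ll * L) * (L * R / \<mu>)"
      using dx nw LH0 L0 ll0 R0 mu_pos by (intro mult_mono add_mono mult_left_mono order_refl) (auto intro!: add_nonneg_nonneg mult_nonneg_nonneg)
  qed
  finally have "norm (u - w) \<le> (L * (L / \<mu> * R * ll) + (LH * (L / \<mu> * R * ll) + ll * L) * (L * R / \<mu>)) / \<mu>"
    using mu_pos by (simp add: field_simps)
  also have "\<dots> = (L / \<mu>)\<^sup>2 * R * ll * (2 + LH * R / \<mu>)"
    using mu_pos by (simp add: field_simps power2_eq_square)
  also have "\<dots> \<le> 2 * (L / \<mu>)\<^sup>2 * R * (1 + LH * R / \<mu>) * ll"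
  proof -
    define X where "X = (L / \<mu>)\<^sup>2 * R * ll * (LH * R / \<mu>)"
    have "0 \<le> X" unfolding X_def
      using R0 ll0 LH0 mu_pos by simp
    moreover have "(L / \<mu>)\<^sup>2 * R * ll * (2 + LH * R / \<mu>) = 2 * ((L / \<mu>)\<^sup>2 * R * ll) + X"
      by (simp add: X_def algebra_simps)
    moreover have "2 * (L / \<mu>)\<^sup>2 * R * (1 + LH * R / \<mu>) * ll = 2 * ((L / \<mu>)\<^sup>2 * R * ll) + 2 * X"
      by (simp add: X_def algebra_simps)
    ultimately show ?thesis by linarith
  qed
  finally show ?thesis by (simp add: u_def w_def ll_def matrix_vector_mult_diff_rdistrib)
qed

end


lemma l1_axis: "l1norm (axis i (1::real) :: real^'n::finite) = 1"
proof -
  have "l1norm (axis i (1::real) :: real^'n) = (\<Sum>j\<in>UNIV. if j = i then 1 else 0)"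
    unfolding l1norm_def by (rule sum.cong) (simp_all add: axis_def)
  then show ?thesis by simp
qed

context mo begin

lemma D_lip:
  assumes b1: "\<beta>1 \<in> std_simplex" and b2: "\<beta>2 \<in> std_simplex"
  shows "op_norm_12 (Dm \<beta>1 - Dm \<beta>2) \<le> 2 * (L / \<mu>)\<^sup>2 * R * (1 + LH * R / \<mu>) * l1norm (\<beta>1 - \<beta>2)"
  unfolding op_norm_12_def
proof (rule cSup_least)
  show "{norm ((Dm \<beta>1 - Dm \<beta>2) *v z) |z. l1norm z = 1} \<noteq> {}"
    using l1_axis by blast
  show "x \<le> 2 * (L / \<mu>)\<^sup>2 * R * (1 + LH * R / \<mu>) * l1norm (\<beta>1 - \<beta>2)"
    if "x \<in> {norm ((Dm \<beta>1 - Dm \<beta>2) *v z) |z. l1norm z = 1}" for x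
    using that D_lip_vec[OF b1 b2] by blast
qed

end

theorem lemma2:
  fixes f :: "'n::finite \<Rightarrow> real^'d \<Rightarrow> real"
    and grad :: "'n \<Rightarrow> real^'d \<Rightarrow> real^'d"
    and hess :: "'n \<Rightarrow> real^'d \<Rightarrow> real^'d^'d"
    and \<mu> L L\<^sub>H :: real
  assumes mu_pos: "0 < \<mu>" and mu_le_L: "\<mu> \<le> L"
    and grad: "\<And>i x. (f i has_derivative (\<lambda>h. grad i x \<bullet> h)) (at x)"
    and hess: "\<And>i x. (grad i has_derivative (\<lambda>h. hess i x *v h)) (at x)"
    and hess_bounds: "\<And>i x v. \<mu> * (norm v)\<^sup>2 \<le> v \<bullet> (hess i x *v v) \<and> v \<bullet> (hess i x *v v) \<le> L * (norm v)\<^sup>2"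
    and hess_lip: "\<And>i x y. onorm (\<lambda>v. (hess i x - hess i y) *v v) \<le> L\<^sub>H * dist x y"
  shows "(let \<kappa> = L / \<mu>; R = diameter (pareto_set f);
             M\<^sub>0 = \<kappa> * R; M\<^sub>1 = 2 * \<kappa>\<^sup>2 * R * (1 + L\<^sub>H * R / \<mu>) in
          (\<forall>\<beta>1\<in>std_simplex. \<forall>\<beta>2\<in>std_simplex.
              norm (xstar f \<beta>1 - xstar f \<beta>2) \<le> M\<^sub>0 * l1norm (\<beta>1 - \<beta>2)) \<and>
          (\<exists>D :: real^'n \<Rightarrow> real^'n^'d.
              (\<forall>\<beta>\<in>std_simplex. (xstar f has_derivative (\<lambda>h. D \<beta> *v h)) (at \<beta> within posorth)) \<and>
              (\<forall>\<beta>1\<in>std_simplex. \<forall>\<beta>2\<in>std_simplex.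
                  op_norm_12 (D \<beta>1 - D \<beta>2) \<le> M\<^sub>1 * l1norm (\<beta>1 - \<beta>2))))"
proof -
  interpret mo f grad hess \<mu> L "L\<^sub>H"
    by unfold_locales (use assms in auto)
  show ?thesis unfolding Let_def
    using M0_bound D_lip xs_deriv by (intro conjI exI[of _ Dm]) auto
qed


end
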